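(* Let $\Lambda:\mathbb{R}\to[0,1]$ be a decreasing function. The following are equivalent: (i) $\mathrm{ES}_\Lambda$ is convex on $L^\infty$, i.e. $\mathrm{ES}_\Lambda(\gamma X+(1-\gamma)Y)\le\gamma\mathrm{ES}_\Lambda(X)+(1-\gamma)\mathrm{ES}_\Lambda(Y)$ for all $X,Y\in L^\infty$, $\gamma\in[0,1]$; (ii) $\mathrm{ES}_\Lambda$ is concave in mixtures; (iii) $\Lambda$ is constant on $\mathbb{R}$.
   Context: $(\Omega,\mathcal F,\mathbb P)$ is an atomless probability space, $L^0$ all random variables, $L^\infty$ essentially bounded ones; "decreasing" is weak; $\wedge=\min$. For $\alpha\in[0,1]$, $X\in L^0$: $\mathrm{VaR}_\alpha(X)=\inf\{x\in\mathbb{R}:\mathbb P(X\le x)\ge\alpha\}$. For $X\in L^\infty$: $\mathrm{ES}_\alpha(X)=\frac{1}{1-\alpha}\int_\alpha^1\mathrm{VaR}_\beta(X)\,\mathrm d\beta$ for $\alpha<1$, $\mathrm{ES}_1(X)=\mathrm{VaR}_1(X)$. For decreasing $\Lambda$: $\mathrm{ES}_\Lambda(X)=\sup_{x\in\mathbb{R}}\left(\mathrm{ES}_{\Lambda(x)}(X)\wedge x\right)$, $X\in L^\infty$. A law-invariant $\rho$ is concave in mixtures if $F\mapsto\rho(X_F)$ is concave on the set of compactly supported distributions on $\mathbb{R}$, i.e. $\rho(X_{\gamma F+(1-\gamma)G})\ge\gamma\rho(X_F)+(1-\gamma)\rho(X_G)$, where $X_F$ denotes a random variable with distribution $F$. 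*)

theory Defs
  imports "HOL-Probability.Probability"
begin

definition atomless :: "'a measure \<Rightarrow> bool" where
  "atomless M \<longleftrightarrow> (\<forall>A\<in>sets M. measure M A > 0 \<longrightarrow>
     (\<exists>B\<in>sets M. B \<subseteq> A \<and> 0 < measure M B \<and> measure M B < measure M A))"

definition Linf :: "'a measure \<Rightarrow> ('a \<Rightarrow> real) set" where
  "Linf M = {X. X \<in> borel_measurable M \<and> (\<exists>C. AE \<omega> in M. \<bar>X \<omega>\<bar> \<le> C)}"

definition VaR :: "'a measure \<Rightarrow> real \<Rightarrow> ('a \<Rightarrow> real) \<Rightarrow> real" where
  "VaR M \<alpha> X = Inf {x. measure M {\<omega>\<in>space M. X \<omega> \<le> x} \<ge> \<alpha>}"

definition ES :: "'a measure \<Rightarrow> real \<Rightarrow> ('a \<Rightarrow> real) \<Rightarrow> real" where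
  "ES M \<alpha> X = (if \<alpha> < 1 then (1 / (1 - \<alpha>)) * integral {\<alpha>..1} (\<lambda>\<beta>. VaR M \<beta> X)
                 else VaR M 1 X)"

definition ES_Lambda :: "'a measure \<Rightarrow> (real \<Rightarrow> real) \<Rightarrow> ('a \<Rightarrow> real) \<Rightarrow> real" where
  "ES_Lambda M \<Lambda> X = (SUP x::real. min (ES M (\<Lambda> x) X) x)"

definition ES_Lambda_convex :: "'a measure \<Rightarrow> (real \<Rightarrow> real) \<Rightarrow> bool" where
  "ES_Lambda_convex M \<Lambda> \<longleftrightarrow> (\<forall>X\<in>Linf M. \<forall>Y\<in>Linf M. \<forall>\<gamma>::real. 0 \<le> \<gamma> \<and> \<gamma> \<le> 1 \<longrightarrow>
     ES_Lambda M \<Lambda> (\<lambda>\<omega>. \<gamma> * X \<omega> + (1 - \<gamma>) * Y \<omega>)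
       \<le> \<gamma> * ES_Lambda M \<Lambda> X + (1 - \<gamma>) * ES_Lambda M \<Lambda> Y)"

text \<open>Compactly supported distributions are exactly the laws of elements of Linf.\<close>
definition ES_Lambda_concave_mixtures :: "'a measure \<Rightarrow> (real \<Rightarrow> real) \<Rightarrow> bool" where
  "ES_Lambda_concave_mixtures M \<Lambda> \<longleftrightarrow> (\<forall>X\<in>Linf M. \<forall>Y\<in>Linf M. \<forall>Z\<in>Linf M. \<forall>\<gamma>::real.
     0 \<le> \<gamma> \<and> \<gamma> \<le> 1 \<and>
     (\<forall>x. measure M {\<omega>\<in>space M. Z \<omega> \<le> x}
            = \<gamma> * measure M {\<omega>\<in>space M. X \<omega> \<le> x} + (1 - \<gamma>) * measure M {\<omega>\<in>space M. Y \<omega> \<le> x})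
     \<longrightarrow> ES_Lambda M \<Lambda> Z \<ge> \<gamma> * ES_Lambda M \<Lambda> X + (1 - \<gamma>) * ES_Lambda M \<Lambda> Y)"

end

theory Submission
  imports Defs
begin


definition dF :: "'a measure \<Rightarrow> ('a \<Rightarrow> real) \<Rightarrow> real \<Rightarrow> real" where
  "dF M X x = measure M {\<omega>\<in>space M. X \<omega> \<le> x}"

lemma VaR_dF: "VaR M \<beta> X = Inf {x. \<beta> \<le> dF M X x}"
  by (simp add: VaR_def dF_def)

lemma layer_cake:
  fixes f :: "'b \<Rightarrow> real"
  assumes N: "sigma_finite_measure N" and f[measurable]: "f \<in> borel_measurable N"
    and nn: "\<And>x. x \<in> space N \<Longrightarrow> 0 \<le> f x"
  shows "(\<integral>\<^sup>+x. ennreal (f x) \<partial>N)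
       = (\<integral>\<^sup>+s. indicator {0..} s * emeasure N {x\<in>space N. s < f x} \<partial>lborel)"
proof -
  interpret N: sigma_finite_measure N by (rule N)
  interpret P: pair_sigma_finite N lborel
    by (intro pair_sigma_finite.intro N lborel.sigma_finite_measure_axioms)
  have meas: "case_prod (\<lambda>x s. indicator {0..<f x} s :: ennreal) \<in> borel_measurable (N \<Otimes>\<^sub>M lborel)"
  proof -
    have "(\<lambda>p. indicator {0..<f (fst p)} (snd p) :: ennreal)
          = (\<lambda>p. if 0 \<le> snd p \<and> snd p < f (fst p) then 1 else 0)"
      by (auto simp: fun_eq_iff indicator_def)
    moreover have "(\<lambda>p. if 0 \<le> snd p \<and> snd p < f (fst p) then 1 else 0 :: ennreal) \<in> borel_measurable (N \<Otimes>\<^sub>M lborel)"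
      by measurable
    ultimately show ?thesis by (simp add: case_prod_beta')
  qed
  have "(\<integral>\<^sup>+x. ennreal (f x) \<partial>N) = (\<integral>\<^sup>+x. (\<integral>\<^sup>+s. indicator {0..<f x} s \<partial>lborel) \<partial>N)"
    by (intro nn_integral_cong) (simp add: nn)
  also have "\<dots> = (\<integral>\<^sup>+s. (\<integral>\<^sup>+x. indicator {0..<f x} s \<partial>N) \<partial>lborel)"
    using P.Fubini'[OF meas] by simp
  also have "\<dots> = (\<integral>\<^sup>+s. indicator {0..} s * emeasure N {x\<in>space N. s < f x} \<partial>lborel)"
  proof (intro nn_integral_cong)
    fix s :: real
    show "(\<integral>\<^sup>+x. indicator {0..<f x} s \<partial>N) = indicator {0..} s * emeasure N {x\<in>space N. s < f x}"
    proof (cases "0 \<le> s")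
      case True
      have "(\<integral>\<^sup>+x. indicator {0..<f x} s \<partial>N) = (\<integral>\<^sup>+x. indicator {x\<in>space N. s < f x} x \<partial>N)"
        by (intro nn_integral_cong) (use True in \<open>auto simp: indicator_def\<close>)
      also have "\<dots> = emeasure N {x\<in>space N. s < f x}"
        by (intro nn_integral_indicator) measurable
      finally show ?thesis using True by simp
    next
      case False
      then show ?thesis by (simp add: indicator_def)
    qed
  qed
  finally show ?thesis .
qed

definition qq :: "'a measure \<Rightarrow> ('a \<Rightarrow> real) \<Rightarrow> real \<Rightarrow> real" where
  "qq M X \<beta> = (if 0 < \<beta> \<and> \<beta> \<le> 1 then VaR M \<beta> X else 0)"

lemma integral_Ioc_Icc:
  fixes f :: "real \<Rightarrow> real"
  shows "integral {a<..b} f = integral {a..b} f"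
proof (rule integral_spike_set)
  show "negligible {x \<in> {a<..b} - {a..b}. f x \<noteq> 0}" by (rule negligible_subset[of "{}"]) auto
  show "negligible {x \<in> {a..b} - {a<..b}. f x \<noteq> 0}"
    by (rule negligible_subset[OF negligible_sing[of a]]) auto
qed

lemma bounded_meas_integrable_on:
  fixes g :: "real \<Rightarrow> real"
  assumes [measurable]: "g \<in> borel_measurable borel" and B: "\<And>x. x \<in> {a..b} \<Longrightarrow> \<bar>g x\<bar> \<le> B"
  shows "g integrable_on {a..b}"
proof -
  have "set_integrable lborel {a..b} g"
    unfolding set_integrable_def
    by (rule integrableI_bounded_set_indicator[where B=B]) (use B in \<open>auto, cases "a \<le> b", auto\<close>)
  then show ?thesis by (rule set_borel_integral_eq_integral(1))
qed

lemma ES_Lambda_const: "ES_Lambda M (\<lambda>_. c) X = ES M c X"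
  unfolding ES_Lambda_def
  by (rule cSup_eq_maximum) (auto intro!: image_eqI[where x="ES M c X"])

lemma max0_convex:
  fixes g a b :: real
  assumes "0 \<le> g" "g \<le> 1"
  shows "max 0 (g * a + (1 - g) * b) \<le> g * max 0 a + (1 - g) * max 0 b"
proof -
  have "g * a \<le> g * max 0 a" using assms by (intro mult_left_mono) auto
  moreover have "(1 - g) * b \<le> (1 - g) * max 0 b" using assms by (intro mult_left_mono) auto
  moreover have "0 \<le> g * max 0 a + (1 - g) * max 0 b" using assms by simp
  ultimately show ?thesis by simp
qed

context prob_space
begin

lemma dF_mono: "X \<in> borel_measurable M \<Longrightarrow> x \<le> y \<Longrightarrow> dF M X x \<le> dF M X y"
  unfolding dF_def by (intro finite_measure_mono) auto

lemma dF_nonneg: "0 \<le> dF M X x"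
  unfolding dF_def by simp

lemma dF_le1: "dF M X x \<le> 1"
  unfolding dF_def by simp

lemma dF_low:
  assumes "X \<in> borel_measurable M" "AE \<omega> in M. \<bar>X \<omega>\<bar> \<le> C" "x < - C"
  shows "dF M X x = 0"
proof -
  have "AE \<omega> in M. \<omega> \<notin> {\<omega>\<in>space M. X \<omega> \<le> x}"
    using assms(2) by eventually_elim (use assms(3) in auto)
  then show ?thesis unfolding dF_def using assms(1) by (subst prob_eq_0) auto
qed

lemma dF_high:
  assumes "X \<in> borel_measurable M" "AE \<omega> in M. \<bar>X \<omega>\<bar> \<le> C" "C \<le> x"
  shows "dF M X x = 1"
proof -
  have "AE \<omega> in M. \<omega> \<in> {\<omega>\<in>space M. X \<omega> \<le> x}"
    using AE_space assms(2) by eventually_elim (use assms(3) in auto)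
  then show ?thesis unfolding dF_def using assms(1) by (subst prob_eq_1) auto
qed

lemma dF_right_cont:
  assumes "X \<in> borel_measurable M"
  shows "continuous (at_right a) (dF M X)"
proof -
  have fm: "finite_measure (distr M borel X)"
    by (rule finite_measure_distr) (rule assms)
  interpret D: finite_borel_measure "distr M borel X"
    by (rule finite_borel_measure.intro[OF fm]) (unfold_locales, simp)
  have "cdf (distr M borel X) x = dF M X x" for x
  proof -
    have "cdf (distr M borel X) x = measure M (X -` {..x} \<inter> space M)"
      unfolding cdf_def using assms by (subst measure_distr) auto
    also have "X -` {..x} \<inter> space M = {\<omega>\<in>space M. X \<omega> \<le> x}" by auto
    finally show ?thesis unfolding dF_def .
  qed
  then have "cdf (distr M borel X) = dF M X" by (rule ext)
  then show ?thesis using D.cdf_is_right_cont by metis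
qed

lemma VaR_props:
  assumes X: "X \<in> borel_measurable M" and C: "AE \<omega> in M. \<bar>X \<omega>\<bar> \<le> C"
    and b: "0 < \<beta>" "\<beta> \<le> 1"
  shows "\<beta> \<le> dF M X (VaR M \<beta> X)" "- C \<le> VaR M \<beta> X" "VaR M \<beta> X \<le> C"
    "\<And>x. VaR M \<beta> X \<le> x \<longleftrightarrow> \<beta> \<le> dF M X x"
proof -
  define S where "S = {x. \<beta> \<le> dF M X x}"
  have CS: "C \<in> S" unfolding S_def using dF_high[OF X C, of C] b by simp
  have lb: "- C \<le> x" if "x \<in> S" for x
  proof (rule ccontr)
    assume "\<not> - C \<le> x"
    then have "dF M X x = 0" using dF_low[OF X C] by simp
    then show False using that b unfolding S_def by simp
  qed
  have bdd: "bdd_below S" unfolding bdd_below_def using lb by blast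
  have ne: "S \<noteq> {}" using CS by auto
  have V: "VaR M \<beta> X = Inf S" unfolding VaR_dF S_def ..
  have key: "\<beta> \<le> dF M X (Inf S)"
  proof (rule tendsto_lowerbound)
    show "(dF M X \<longlongrightarrow> dF M X (Inf S)) (at_right (Inf S))"
      using dF_right_cont[OF X] unfolding continuous_within by simp
    show "\<forall>\<^sub>F x in at_right (Inf S). \<beta> \<le> dF M X x"
      using eventually_at_right_less
    proof eventually_elim
      case (elim x)
      then obtain y where "y \<in> S" "y < x" using cInf_lessD[OF ne] by blast
      then show ?case unfolding S_def using dF_mono[OF X, of y x] by auto
    qed
    show "\<not> trivial_limit (at_right (Inf S))" by simp
  qed
  show "\<beta> \<le> dF M X (VaR M \<beta> X)" using key V by simp
  show "- C \<le> VaR M \<beta> X" using V key lb unfolding S_def by auto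
  show "VaR M \<beta> X \<le> C" using V cInf_lower[OF CS bdd] by simp
  show "VaR M \<beta> X \<le> x \<longleftrightarrow> \<beta> \<le> dF M X x" for x
  proof
    assume "VaR M \<beta> X \<le> x"
    then show "\<beta> \<le> dF M X x" using key V dF_mono[OF X, of "Inf S" x] by simp
  next
    assume "\<beta> \<le> dF M X x"
    then show "VaR M \<beta> X \<le> x" using V cInf_lower[OF _ bdd, of x] unfolding S_def by simp
  qed
qed

lemma VaR_mono:
  assumes X: "X \<in> borel_measurable M" and C: "AE \<omega> in M. \<bar>X \<omega>\<bar> \<le> C"
    and b: "0 < \<beta>" "\<beta> \<le> \<beta>'" "\<beta>' \<le> 1"
  shows "VaR M \<beta> X \<le> VaR M \<beta>' X"
proof -
  have "\<beta>' \<le> dF M X (VaR M \<beta>' X)" using VaR_props(1)[OF X C, of \<beta>'] b by simp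
  then show ?thesis using VaR_props(4)[OF X C, of \<beta>] b by simp
qed

lemma qq_meas:
  assumes X: "X \<in> borel_measurable M" and C: "AE \<omega> in M. \<bar>X \<omega>\<bar> \<le> C"
  shows "qq M X \<in> borel_measurable borel"
proof (rule borel_measurable_piecewise_mono[of "{{..0}, {0<..1}, {1<..}}"])
  show "countable {{..0::real}, {0<..1}, {1<..}}" by simp
  show "\<And>c. c \<in> {{..0::real}, {0<..1}, {1<..}} \<Longrightarrow> c \<in> sets borel" by auto
  show "\<Union> {{..0::real}, {0<..1}, {1<..}} = UNIV" by auto
  fix c assume "c \<in> {{..0::real}, {0<..1}, {1<..}}"
  then show "mono_on c (qq M X)"
    by (auto simp: mono_on_def qq_def intro: VaR_mono[OF X C])
qed

lemma E_layer:
  assumes X[measurable]: "X \<in> borel_measurable M"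
  shows "(\<integral>\<^sup>+\<omega>. ennreal (max 0 (X \<omega> - t)) \<partial>M)
       = (\<integral>\<^sup>+s. indicator {0..} s * ennreal (1 - dF M X (t + s)) \<partial>lborel)"
proof -
  have "(\<integral>\<^sup>+\<omega>. ennreal (max 0 (X \<omega> - t)) \<partial>M)
      = (\<integral>\<^sup>+s. indicator {0..} s * emeasure M {\<omega>\<in>space M. s < max 0 (X \<omega> - t)} \<partial>lborel)"
    by (rule layer_cake) (auto intro: sigma_finite_measure_axioms)
  also have "\<dots> = (\<integral>\<^sup>+s. indicator {0..} s * ennreal (1 - dF M X (t + s)) \<partial>lborel)"
  proof (intro nn_integral_cong)
    fix s :: real
    show "indicator {0..} s * emeasure M {\<omega>\<in>space M. s < max 0 (X \<omega> - t)}
        = indicator {0..} s * ennreal (1 - dF M X (t + s))"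
    proof (cases "0 \<le> s")
      case True
      have "{\<omega>\<in>space M. s < max 0 (X \<omega> - t)} = space M - {\<omega>\<in>space M. X \<omega> \<le> t + s}"
        using True by auto
      then have "emeasure M {\<omega>\<in>space M. s < max 0 (X \<omega> - t)} = ennreal (1 - dF M X (t + s))"
        unfolding dF_def by (simp add: emeasure_eq_measure prob_compl)
      then show ?thesis by simp
    qed simp
  qed
  finally show ?thesis .
qed

lemma Q_layer:
  assumes X[measurable]: "X \<in> borel_measurable M" and C: "AE \<omega> in M. \<bar>X \<omega>\<bar> \<le> C"
  shows "(\<integral>\<^sup>+\<beta>. ennreal (indicator {0<..1} \<beta> * max 0 (qq M X \<beta> - t)) \<partial>lborel)
       = (\<integral>\<^sup>+s. indicator {0..} s * ennreal (1 - dF M X (t + s)) \<partial>lborel)"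
proof -
  have qm[measurable]: "qq M X \<in> borel_measurable borel" by (rule qq_meas[OF X C])
  have "(\<integral>\<^sup>+\<beta>. ennreal (indicator {0<..1} \<beta> * max 0 (qq M X \<beta> - t)) \<partial>lborel)
      = (\<integral>\<^sup>+s. indicator {0..} s * emeasure lborel {\<beta>\<in>space lborel. s < indicator {0<..1} \<beta> * max 0 (qq M X \<beta> - t)} \<partial>lborel)"
    by (rule layer_cake) (auto intro: lborel.sigma_finite_measure_axioms)
  also have "\<dots> = (\<integral>\<^sup>+s. indicator {0..} s * ennreal (1 - dF M X (t + s)) \<partial>lborel)"
  proof (intro nn_integral_cong)
    fix s :: real
    show "indicator {0..} s * emeasure lborel {\<beta>\<in>space lborel. s < indicator {0<..1} \<beta> * max 0 (qq M X \<beta> - t)}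
        = indicator {0..} s * ennreal (1 - dF M X (t + s))"
    proof (cases "0 \<le> s")
      case True
      have "{\<beta>\<in>space lborel. s < indicator {0<..1} \<beta> * max 0 (qq M X \<beta> - t)} = {dF M X (t + s)<..1}"
      proof (intro set_eqI iffI)
        fix \<beta> assume "\<beta> \<in> {\<beta>\<in>space lborel. s < indicator {0<..1} \<beta> * max 0 (qq M X \<beta> - t)}"
        then have b: "0 < \<beta>" "\<beta> \<le> 1" "t + s < VaR M \<beta> X" using True
          by (auto simp: indicator_def qq_def split: if_splits)
        then show "\<beta> \<in> {dF M X (t + s)<..1}" using VaR_props(4)[OF X C b(1,2), of "t + s"] by auto
      next
        fix \<beta> assume "\<beta> \<in> {dF M X (t + s)<..1}"
        then have b: "dF M X (t + s) < \<beta>" "\<beta> \<le> 1" by auto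
        then have b0: "0 < \<beta>" using dF_nonneg[of X "t + s"] by linarith
        then have "t + s < VaR M \<beta> X" using VaR_props(4)[OF X C b0 b(2), of "t + s"] b by auto
        then show "\<beta> \<in> {\<beta>\<in>space lborel. s < indicator {0<..1} \<beta> * max 0 (qq M X \<beta> - t)}"
          using b b0 by (auto simp: qq_def indicator_def)
      qed
      then show ?thesis using dF_le1[of X "t + s"] by simp
    qed simp
  qed
  finally show ?thesis .
qed

lemma qq_bound:
  assumes X: "X \<in> borel_measurable M" and C: "AE \<omega> in M. \<bar>X \<omega>\<bar> \<le> C"
  shows "\<bar>qq M X \<beta>\<bar> \<le> \<bar>C\<bar>"
  using VaR_props(2,3)[OF X C, of \<beta>] by (auto simp: qq_def)

lemma Ep_integrable:
  fixes t :: real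
  assumes X[measurable]: "X \<in> borel_measurable M" and C: "AE \<omega> in M. \<bar>X \<omega>\<bar> \<le> C"
  shows "integrable M (\<lambda>\<omega>. max 0 (X \<omega> - t))"
proof (rule integrable_const_bound[where B="\<bar>C\<bar> + \<bar>t\<bar>"])
  show "AE x in M. norm (max 0 (X x - t)) \<le> \<bar>C\<bar> + \<bar>t\<bar>"
    using C by eventually_elim auto
qed simp

lemma qq_Ep:
  assumes X[measurable]: "X \<in> borel_measurable M" and C: "AE \<omega> in M. \<bar>X \<omega>\<bar> \<le> C"
  shows "integral {0..1} (\<lambda>\<beta>. max 0 (qq M X \<beta> - t)) = (\<integral>\<omega>. max 0 (X \<omega> - t) \<partial>M)"
proof -
  have qm[measurable]: "qq M X \<in> borel_measurable borel" by (rule qq_meas[OF X C])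
  define f where "f = (\<lambda>\<beta>. max 0 (qq M X \<beta> - t))"
  have fm[measurable]: "f \<in> borel_measurable borel" unfolding f_def by measurable
  have fb: "\<bar>f x\<bar> \<le> \<bar>C\<bar> + \<bar>t\<bar>" for x
    using qq_bound[OF X C, of x] by (auto simp: f_def)
  have fint: "f integrable_on {0..1}"
    by (rule bounded_meas_integrable_on[OF fm, where B="\<bar>C\<bar> + \<bar>t\<bar>"]) (rule fb)
  have "(\<integral>\<^sup>+\<omega>. ennreal (max 0 (X \<omega> - t)) \<partial>M) = ennreal (\<integral>\<omega>. max 0 (X \<omega> - t) \<partial>M)"
    by (rule nn_integral_eq_integral[OF Ep_integrable[OF X C]]) auto
  moreover have "(\<integral>\<^sup>+\<beta>. ennreal (indicator {0<..1} \<beta> * max 0 (qq M X \<beta> - t)) \<partial>lborel)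
       = (\<integral>\<^sup>+\<omega>. ennreal (max 0 (X \<omega> - t)) \<partial>M)"
    using Q_layer[OF X C, of t] E_layer[OF X, of t] by simp
  moreover have "(\<integral>\<^sup>+\<beta>. ennreal (indicator {0<..1} \<beta> * max 0 (qq M X \<beta> - t)) \<partial>lborel)
       = (\<integral>\<^sup>+x\<in>{0<..1}. f x \<partial>lborel)"
    by (intro nn_integral_cong) (auto simp: f_def indicator_def)
  ultimately have eq: "(\<integral>\<^sup>+x\<in>{0<..1}. f x \<partial>lborel) = ennreal (\<integral>\<omega>. max 0 (X \<omega> - t) \<partial>M)"
    by simp
  have "(\<integral>\<^sup>+x\<in>{0<..1}. f x \<partial>lborel) = integral {0<..1} f"
    by (rule set_nn_integral_lborel_eq_integral)
       (use eq in \<open>auto simp: f_def set_borel_measurable_def\<close>)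
  then have "ennreal (integral {0..1} f) = ennreal (\<integral>\<omega>. max 0 (X \<omega> - t) \<partial>M)"
    using eq integral_Ioc_Icc[of 0 1 f] by simp
  moreover have "0 \<le> integral {0..1} f"
    by (rule integral_nonneg[OF fint]) (simp add: f_def)
  moreover have "0 \<le> (\<integral>\<omega>. max 0 (X \<omega> - t) \<partial>M)" by (rule integral_nonneg_AE) auto
  ultimately show ?thesis unfolding f_def by simp
qed

lemma RU:
  fixes t :: real
  assumes X[measurable]: "X \<in> borel_measurable M" and C: "AE \<omega> in M. \<bar>X \<omega>\<bar> \<le> C"
    and c: "0 \<le> c" "c < 1"
  shows "(1 - c) * ES M c X \<le> (1 - c) * t + (\<integral>\<omega>. max 0 (X \<omega> - t) \<partial>M)"
    and "\<exists>t. (1 - c) * ES M c X = (1 - c) * t + (\<integral>\<omega>. max 0 (X \<omega> - t) \<partial>M)"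
proof -
  have qm[measurable]: "qq M X \<in> borel_measurable borel" by (rule qq_meas[OF X C])
  have qint: "qq M X integrable_on {0..1}"
    by (rule bounded_meas_integrable_on[OF qm, where B="\<bar>C\<bar>"]) (rule qq_bound[OF X C])
  have qint': "qq M X integrable_on {c..1}"
    by (rule integrable_on_subinterval[OF qint]) (use c in auto)
  have fint: "(\<lambda>\<beta>. max 0 (qq M X \<beta> - s)) integrable_on {0..1}" for s
  proof (rule bounded_meas_integrable_on[where B="\<bar>C\<bar> + \<bar>s\<bar>"])
    show "(\<lambda>\<beta>. max 0 (qq M X \<beta> - s)) \<in> borel_measurable borel" by measurable
    show "\<bar>max 0 (qq M X x - s)\<bar> \<le> \<bar>C\<bar> + \<bar>s\<bar>" for x using qq_bound[OF X C, of x] by auto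
  qed
  have fint': "(\<lambda>\<beta>. max 0 (qq M X \<beta> - s)) integrable_on {c..1}" for s
    by (rule integrable_on_subinterval[OF fint]) (use c in auto)
  have ES_eq: "(1 - c) * ES M c X = integral {c..1} (qq M X)"
  proof -
    have "(1 - c) * ES M c X = integral {c..1} (\<lambda>\<beta>. VaR M \<beta> X)" using c by (simp add: ES_def)
    also have "\<dots> = integral {c..1} (qq M X)"
      by (rule integral_spike[OF negligible_sing[of 0]]) (use c in \<open>auto simp: qq_def\<close>)
    finally show ?thesis .
  qed
  have split: "integral {c..1} (\<lambda>\<beta>. s + max 0 (qq M X \<beta> - s))
      = (1 - c) * s + integral {c..1} (\<lambda>\<beta>. max 0 (qq M X \<beta> - s))" for s
    using c by (subst integral_add) (auto intro: fint')
  show "(1 - c) * ES M c X \<le> (1 - c) * t + (\<integral>\<omega>. max 0 (X \<omega> - t) \<partial>M)"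
  proof -
    have "integral {c..1} (qq M X) \<le> integral {c..1} (\<lambda>\<beta>. t + max 0 (qq M X \<beta> - t))"
      by (rule integral_le[OF qint']) (auto intro!: integrable_add fint')
    also have "\<dots> = (1 - c) * t + integral {c..1} (\<lambda>\<beta>. max 0 (qq M X \<beta> - t))" by (rule split)
    also have "integral {c..1} (\<lambda>\<beta>. max 0 (qq M X \<beta> - t)) \<le> integral {0..1} (\<lambda>\<beta>. max 0 (qq M X \<beta> - t))"
      by (rule integral_subset_le[OF _ fint' fint]) (use c in auto)
    finally show ?thesis using ES_eq qq_Ep[OF X C, of t] by simp
  qed
  define t0 where "t0 = (if c = 0 then - \<bar>C\<bar> else VaR M c X)"
  have up: "t0 \<le> qq M X \<beta>" if "c < \<beta>" "\<beta> \<le> 1" for \<beta>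
  proof (cases "c = 0")
    case True
    then show ?thesis using that VaR_props(2)[OF X C, of \<beta>] by (auto simp: t0_def qq_def)
  next
    case False
    then show ?thesis using that c VaR_mono[OF X C, of c \<beta>] by (auto simp: t0_def qq_def)
  qed
  have down: "qq M X \<beta> \<le> t0" if "0 < \<beta>" "\<beta> \<le> c" for \<beta>
  proof -
    have "c \<noteq> 0" using that by auto
    then show ?thesis using that c VaR_mono[OF X C, of \<beta> c] by (auto simp: t0_def qq_def)
  qed
  show "\<exists>t. (1 - c) * ES M c X = (1 - c) * t + (\<integral>\<omega>. max 0 (X \<omega> - t) \<partial>M)"
  proof (intro exI)
    have "integral {c..1} (qq M X) = integral {c..1} (\<lambda>\<beta>. t0 + max 0 (qq M X \<beta> - t0))"
    proof (rule integral_spike[OF negligible_sing[of c]])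
      fix x assume "x \<in> {c..1} - {c}"
      then have "c < x" "x \<le> 1" by auto
      from up[OF this] show "t0 + max 0 (qq M X x - t0) = qq M X x" by simp
    qed
    also have "\<dots> = (1 - c) * t0 + integral {c..1} (\<lambda>\<beta>. max 0 (qq M X \<beta> - t0))" by (rule split)
    also have "integral {c..1} (\<lambda>\<beta>. max 0 (qq M X \<beta> - t0)) = integral {0..1} (\<lambda>\<beta>. max 0 (qq M X \<beta> - t0))"
    proof -
      have "integral {0..c} (\<lambda>\<beta>. max 0 (qq M X \<beta> - t0)) = integral {0..c} (\<lambda>\<beta>. 0)"
      proof (rule integral_spike[OF negligible_sing[of 0]])
        fix x assume "x \<in> {0..c} - {0}"
        then have "0 < x" "x \<le> c" by auto
        from down[OF this] show "0 = max 0 (qq M X x - t0)" by simp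
      qed
      then have "integral {0..c} (\<lambda>\<beta>. max 0 (qq M X \<beta> - t0)) = 0" by simp
      moreover have "integral {0..c} (\<lambda>\<beta>. max 0 (qq M X \<beta> - t0)) + integral {c..1} (\<lambda>\<beta>. max 0 (qq M X \<beta> - t0))
          = integral {0..1} (\<lambda>\<beta>. max 0 (qq M X \<beta> - t0))"
        by (rule Henstock_Kurzweil_Integration.integral_combine[OF _ _ fint]) (use c in auto)
      ultimately show ?thesis by simp
    qed
    finally show "(1 - c) * ES M c X = (1 - c) * t0 + (\<integral>\<omega>. max 0 (X \<omega> - t0) \<partial>M)"
      using ES_eq qq_Ep[OF X C, of t0] by simp
  qed
qed

lemma Linf_D:
  assumes "X \<in> Linf M"
  obtains C where "X \<in> borel_measurable M" "AE \<omega> in M. \<bar>X \<omega>\<bar> \<le> C"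
  using assms unfolding Linf_def by auto

lemma Linf_comb:
  assumes "X \<in> Linf M" "Y \<in> Linf M" "0 \<le> g" "g \<le> 1"
  shows "(\<lambda>\<omega>. g * X \<omega> + (1 - g) * Y \<omega>) \<in> Linf M"
proof -
  obtain C1 where X: "X \<in> borel_measurable M" "AE \<omega> in M. \<bar>X \<omega>\<bar> \<le> C1" using assms(1) by (rule Linf_D)
  obtain C2 where Y: "Y \<in> borel_measurable M" "AE \<omega> in M. \<bar>Y \<omega>\<bar> \<le> C2" using assms(2) by (rule Linf_D)
  have "AE \<omega> in M. \<bar>g * X \<omega> + (1 - g) * Y \<omega>\<bar> \<le> g * C1 + (1 - g) * C2"
    using X(2) Y(2)
  proof eventually_elim
    case (elim \<omega>)
    have "\<bar>g * X \<omega> + (1 - g) * Y \<omega>\<bar> \<le> \<bar>g * X \<omega>\<bar> + \<bar>(1 - g) * Y \<omega>\<bar>" by (rule abs_triangle_ineq)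
    also have "\<dots> = g * \<bar>X \<omega>\<bar> + (1 - g) * \<bar>Y \<omega>\<bar>" using assms(3,4) by (simp add: abs_mult)
    also have "\<dots> \<le> g * C1 + (1 - g) * C2"
      using elim assms(3,4) by (intro add_mono mult_left_mono) auto
    finally show ?case .
  qed
  then show ?thesis unfolding Linf_def using X(1) Y(1) by auto
qed

lemma ES_convex_lt1:
  assumes XL: "X \<in> Linf M" and YL: "Y \<in> Linf M" and g: "0 \<le> g" "g \<le> 1" and c: "0 \<le> c" "c < 1"
  shows "ES M c (\<lambda>\<omega>. g * X \<omega> + (1 - g) * Y \<omega>) \<le> g * ES M c X + (1 - g) * ES M c Y"
proof -
  obtain C1 where X[measurable]: "X \<in> borel_measurable M" and CX: "AE \<omega> in M. \<bar>X \<omega>\<bar> \<le> C1" using XL by (rule Linf_D)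
  obtain C2 where Y[measurable]: "Y \<in> borel_measurable M" and CY: "AE \<omega> in M. \<bar>Y \<omega>\<bar> \<le> C2" using YL by (rule Linf_D)
  define Z where "Z = (\<lambda>\<omega>. g * X \<omega> + (1 - g) * Y \<omega>)"
  obtain C3 where Z[measurable]: "Z \<in> borel_measurable M" and CZ: "AE \<omega> in M. \<bar>Z \<omega>\<bar> \<le> C3"
    using Linf_comb[OF XL YL g] unfolding Z_def[symmetric] by (rule Linf_D)
  obtain t1 where t1: "(1 - c) * ES M c X = (1 - c) * t1 + (\<integral>\<omega>. max 0 (X \<omega> - t1) \<partial>M)"
    using RU(2)[OF X CX c] by blast
  obtain t2 where t2: "(1 - c) * ES M c Y = (1 - c) * t2 + (\<integral>\<omega>. max 0 (Y \<omega> - t2) \<partial>M)"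
    using RU(2)[OF Y CY c] by blast
  define t where "t = g * t1 + (1 - g) * t2"
  have "(\<integral>\<omega>. max 0 (Z \<omega> - t) \<partial>M)
      \<le> (\<integral>\<omega>. g * max 0 (X \<omega> - t1) + (1 - g) * max 0 (Y \<omega> - t2) \<partial>M)"
  proof (rule integral_mono)
    show "integrable M (\<lambda>\<omega>. max 0 (Z \<omega> - t))" by (rule Ep_integrable[OF Z CZ])
    show "integrable M (\<lambda>\<omega>. g * max 0 (X \<omega> - t1) + (1 - g) * max 0 (Y \<omega> - t2))"
      using Ep_integrable[OF X CX, of t1] Ep_integrable[OF Y CY, of t2] by auto
    fix \<omega>
    have "Z \<omega> - t = g * (X \<omega> - t1) + (1 - g) * (Y \<omega> - t2)"
      unfolding Z_def t_def by (simp add: algebra_simps)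
    then show "max 0 (Z \<omega> - t) \<le> g * max 0 (X \<omega> - t1) + (1 - g) * max 0 (Y \<omega> - t2)"
      using max0_convex[OF g] by simp
  qed
  also have "\<dots> = g * (\<integral>\<omega>. max 0 (X \<omega> - t1) \<partial>M) + (1 - g) * (\<integral>\<omega>. max 0 (Y \<omega> - t2) \<partial>M)"
    using Ep_integrable[OF X CX, of t1] Ep_integrable[OF Y CY, of t2] by simp
  finally have E: "(\<integral>\<omega>. max 0 (Z \<omega> - t) \<partial>M)
      \<le> g * (\<integral>\<omega>. max 0 (X \<omega> - t1) \<partial>M) + (1 - g) * (\<integral>\<omega>. max 0 (Y \<omega> - t2) \<partial>M)" .
  have "(1 - c) * ES M c Z \<le> (1 - c) * t + (\<integral>\<omega>. max 0 (Z \<omega> - t) \<partial>M)"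
    by (rule RU(1)[OF Z CZ c])
  also have "\<dots> \<le> g * ((1 - c) * ES M c X) + (1 - g) * ((1 - c) * ES M c Y)"
    using E unfolding t1 t2 t_def by (simp add: algebra_simps)
  finally have "(1 - c) * ES M c Z \<le> (1 - c) * (g * ES M c X + (1 - g) * ES M c Y)"
    by (simp add: algebra_simps)
  then show ?thesis using c unfolding Z_def by simp
qed

lemma dF_eq_1_AE:
  assumes X[measurable]: "X \<in> borel_measurable M" and "1 \<le> dF M X a"
  shows "AE \<omega> in M. X \<omega> \<le> a"
proof -
  have "dF M X a = 1" using assms dF_le1[of X a] by simp
  then have "AE \<omega> in M. \<omega> \<in> {\<omega>\<in>space M. X \<omega> \<le> a}" unfolding dF_def by (subst (asm) prob_eq_1) auto
  then show ?thesis by auto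
qed

lemma ES1_convex:
  assumes XL: "X \<in> Linf M" and YL: "Y \<in> Linf M" and g: "0 \<le> g" "g \<le> 1"
  shows "ES M 1 (\<lambda>\<omega>. g * X \<omega> + (1 - g) * Y \<omega>) \<le> g * ES M 1 X + (1 - g) * ES M 1 Y"
proof -
  obtain C1 where X[measurable]: "X \<in> borel_measurable M" and CX: "AE \<omega> in M. \<bar>X \<omega>\<bar> \<le> C1" using XL by (rule Linf_D)
  obtain C2 where Y[measurable]: "Y \<in> borel_measurable M" and CY: "AE \<omega> in M. \<bar>Y \<omega>\<bar> \<le> C2" using YL by (rule Linf_D)
  define Z where "Z = (\<lambda>\<omega>. g * X \<omega> + (1 - g) * Y \<omega>)"
  obtain C3 where Z[measurable]: "Z \<in> borel_measurable M" and CZ: "AE \<omega> in M. \<bar>Z \<omega>\<bar> \<le> C3"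
    using Linf_comb[OF XL YL g] unfolding Z_def[symmetric] by (rule Linf_D)
  define a where "a = VaR M 1 X"
  define b where "b = VaR M 1 Y"
  have ax: "AE \<omega> in M. X \<omega> \<le> a" using dF_eq_1_AE[OF X VaR_props(1)[OF X CX]] by (simp add: a_def)
  have by': "AE \<omega> in M. Y \<omega> \<le> b" using dF_eq_1_AE[OF Y VaR_props(1)[OF Y CY]] by (simp add: b_def)
  have "AE \<omega> in M. Z \<omega> \<le> g * a + (1 - g) * b"
    using ax by'
  proof eventually_elim
    case (elim \<omega>)
    then show ?case unfolding Z_def using g by (intro add_mono mult_left_mono) auto
  qed
  then have "AE \<omega> in M. \<omega> \<in> {\<omega>\<in>space M. Z \<omega> \<le> g * a + (1 - g) * b}"
    using AE_space by eventually_elim auto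
  then have "dF M Z (g * a + (1 - g) * b) = 1" unfolding dF_def by (subst prob_eq_1) auto
  then have "VaR M 1 Z \<le> g * a + (1 - g) * b" using VaR_props(4)[OF Z CZ, of 1] by simp
  then show ?thesis unfolding ES_def Z_def a_def b_def by simp
qed

lemma dF_meas:
  assumes "X \<in> borel_measurable M"
  shows "dF M X \<in> borel_measurable borel"
  by (rule borel_measurable_mono) (auto simp: mono_def intro: dF_mono[OF assms])

lemma Ep_mix:
  fixes t :: real
  assumes X[measurable]: "X \<in> borel_measurable M" and CX: "AE \<omega> in M. \<bar>X \<omega>\<bar> \<le> C1"
    and Y[measurable]: "Y \<in> borel_measurable M" and CY: "AE \<omega> in M. \<bar>Y \<omega>\<bar> \<le> C2"
    and Z[measurable]: "Z \<in> borel_measurable M" and CZ: "AE \<omega> in M. \<bar>Z \<omega>\<bar> \<le> C3"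
    and g: "0 \<le> g" "g \<le> 1"
    and mix: "\<And>x. dF M Z x = g * dF M X x + (1 - g) * dF M Y x"
  shows "(\<integral>\<omega>. max 0 (Z \<omega> - t) \<partial>M)
       = g * (\<integral>\<omega>. max 0 (X \<omega> - t) \<partial>M) + (1 - g) * (\<integral>\<omega>. max 0 (Y \<omega> - t) \<partial>M)"
proof -
  have [measurable]: "dF M X \<in> borel_measurable borel" "dF M Y \<in> borel_measurable borel"
    using dF_meas X Y by auto
  have ennE: "(\<integral>\<^sup>+\<omega>. ennreal (max 0 (W \<omega> - t)) \<partial>M) = ennreal (\<integral>\<omega>. max 0 (W \<omega> - t) \<partial>M)"
    if "W \<in> borel_measurable M" "AE \<omega> in M. \<bar>W \<omega>\<bar> \<le> C" for W C
    by (rule nn_integral_eq_integral[OF Ep_integrable[OF that]]) auto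
  have "ennreal (\<integral>\<omega>. max 0 (Z \<omega> - t) \<partial>M)
      = (\<integral>\<^sup>+s. indicator {0..} s * ennreal (1 - dF M Z (t + s)) \<partial>lborel)"
    using ennE[OF Z CZ] E_layer[OF Z, of t] by simp
  also have "\<dots> = (\<integral>\<^sup>+s. ennreal g * (indicator {0..} s * ennreal (1 - dF M X (t + s)))
        + ennreal (1 - g) * (indicator {0..} s * ennreal (1 - dF M Y (t + s))) \<partial>lborel)"
  proof (intro nn_integral_cong)
    fix s :: real
    have "1 - dF M Z (t + s) = g * (1 - dF M X (t + s)) + (1 - g) * (1 - dF M Y (t + s))"
      using mix[of "t + s"] by (simp add: algebra_simps)
    then have "ennreal (1 - dF M Z (t + s)) = ennreal g * ennreal (1 - dF M X (t + s))
        + ennreal (1 - g) * ennreal (1 - dF M Y (t + s))"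
    proof -
      have a: "0 \<le> 1 - dF M X (t + s)" "0 \<le> 1 - dF M Y (t + s)"
        using dF_le1[of X "t + s"] dF_le1[of Y "t + s"] by auto
      have "ennreal (g * (1 - dF M X (t + s)) + (1 - g) * (1 - dF M Y (t + s)))
          = ennreal (g * (1 - dF M X (t + s))) + ennreal ((1 - g) * (1 - dF M Y (t + s)))"
        using a g by (intro ennreal_plus) auto
      also have "\<dots> = ennreal g * ennreal (1 - dF M X (t + s)) + ennreal (1 - g) * ennreal (1 - dF M Y (t + s))"
        using a g by (simp add: ennreal_mult)
      finally show ?thesis using \<open>1 - dF M Z (t + s) = _\<close> by simp
    qed
    then show "indicator {0..} s * ennreal (1 - dF M Z (t + s))
        = ennreal g * (indicator {0..} s * ennreal (1 - dF M X (t + s)))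
        + ennreal (1 - g) * (indicator {0..} s * ennreal (1 - dF M Y (t + s)))"
      by (simp add: indicator_def algebra_simps)
  qed
  also have "\<dots> = ennreal g * (\<integral>\<^sup>+s. indicator {0..} s * ennreal (1 - dF M X (t + s)) \<partial>lborel)
        + ennreal (1 - g) * (\<integral>\<^sup>+s. indicator {0..} s * ennreal (1 - dF M Y (t + s)) \<partial>lborel)"
    by (subst nn_integral_add) (auto simp: nn_integral_cmult)
  also have "\<dots> = ennreal g * ennreal (\<integral>\<omega>. max 0 (X \<omega> - t) \<partial>M)
        + ennreal (1 - g) * ennreal (\<integral>\<omega>. max 0 (Y \<omega> - t) \<partial>M)"
    by (simp only: E_layer[OF X, of t, symmetric] E_layer[OF Y, of t, symmetric] ennE[OF X CX] ennE[OF Y CY])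
  also have "\<dots> = ennreal (g * (\<integral>\<omega>. max 0 (X \<omega> - t) \<partial>M) + (1 - g) * (\<integral>\<omega>. max 0 (Y \<omega> - t) \<partial>M))"
  proof -
    have a: "0 \<le> (\<integral>\<omega>. max 0 (X \<omega> - t) \<partial>M)" "0 \<le> (\<integral>\<omega>. max 0 (Y \<omega> - t) \<partial>M)"
      by (auto intro: integral_nonneg_AE)
    have "ennreal (g * (\<integral>\<omega>. max 0 (X \<omega> - t) \<partial>M) + (1 - g) * (\<integral>\<omega>. max 0 (Y \<omega> - t) \<partial>M))
       = ennreal (g * (\<integral>\<omega>. max 0 (X \<omega> - t) \<partial>M)) + ennreal ((1 - g) * (\<integral>\<omega>. max 0 (Y \<omega> - t) \<partial>M))"
      using a g by (intro ennreal_plus) auto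
    also have "\<dots> = ennreal g * ennreal (\<integral>\<omega>. max 0 (X \<omega> - t) \<partial>M) + ennreal (1 - g) * ennreal (\<integral>\<omega>. max 0 (Y \<omega> - t) \<partial>M)"
      using a g by (simp add: ennreal_mult)
    finally show ?thesis by simp
  qed
  finally have eq: "ennreal (\<integral>\<omega>. max 0 (Z \<omega> - t) \<partial>M) = ennreal (g * (\<integral>\<omega>. max 0 (X \<omega> - t) \<partial>M) + (1 - g) * (\<integral>\<omega>. max 0 (Y \<omega> - t) \<partial>M))" .
  have "0 \<le> (\<integral>\<omega>. max 0 (Z \<omega> - t) \<partial>M)" "0 \<le> g * (\<integral>\<omega>. max 0 (X \<omega> - t) \<partial>M) + (1 - g) * (\<integral>\<omega>. max 0 (Y \<omega> - t) \<partial>M)"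
    using g by (auto intro!: integral_nonneg_AE add_nonneg_nonneg mult_nonneg_nonneg)
  then show ?thesis using eq ennreal_inj by blast
qed

lemma ES_mix_lt1:
  assumes XL: "X \<in> Linf M" and YL: "Y \<in> Linf M" and ZL: "Z \<in> Linf M"
    and g: "0 \<le> g" "g \<le> 1" and c: "0 \<le> c" "c < 1"
    and mix: "\<And>x. dF M Z x = g * dF M X x + (1 - g) * dF M Y x"
  shows "g * ES M c X + (1 - g) * ES M c Y \<le> ES M c Z"
proof -
  obtain C1 where X[measurable]: "X \<in> borel_measurable M" and CX: "AE \<omega> in M. \<bar>X \<omega>\<bar> \<le> C1" using XL by (rule Linf_D)
  obtain C2 where Y[measurable]: "Y \<in> borel_measurable M" and CY: "AE \<omega> in M. \<bar>Y \<omega>\<bar> \<le> C2" using YL by (rule Linf_D)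
  obtain C3 where Z[measurable]: "Z \<in> borel_measurable M" and CZ: "AE \<omega> in M. \<bar>Z \<omega>\<bar> \<le> C3" using ZL by (rule Linf_D)
  obtain t where t: "(1 - c) * ES M c Z = (1 - c) * t + (\<integral>\<omega>. max 0 (Z \<omega> - t) \<partial>M)"
    using RU(2)[OF Z CZ c] by blast
  have "(1 - c) * (g * ES M c X + (1 - g) * ES M c Y)
      = g * ((1 - c) * ES M c X) + (1 - g) * ((1 - c) * ES M c Y)" by (simp add: algebra_simps)
  also have "\<dots> \<le> g * ((1 - c) * t + (\<integral>\<omega>. max 0 (X \<omega> - t) \<partial>M))
      + (1 - g) * ((1 - c) * t + (\<integral>\<omega>. max 0 (Y \<omega> - t) \<partial>M))"
    using g RU(1)[OF X CX c, of t] RU(1)[OF Y CY c, of t]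
    by (intro add_mono mult_left_mono) auto
  also have "\<dots> = (1 - c) * ES M c Z"
    unfolding t Ep_mix[OF X CX Y CY Z CZ g mix] by (simp add: algebra_simps)
  finally show ?thesis using c by simp
qed

lemma ES1_mix:
  assumes XL: "X \<in> Linf M" and YL: "Y \<in> Linf M" and ZL: "Z \<in> Linf M"
    and g: "0 \<le> g" "g \<le> 1"
    and mix: "\<And>x. dF M Z x = g * dF M X x + (1 - g) * dF M Y x"
  shows "g * ES M 1 X + (1 - g) * ES M 1 Y \<le> ES M 1 Z"
proof -
  obtain C1 where X[measurable]: "X \<in> borel_measurable M" and CX: "AE \<omega> in M. \<bar>X \<omega>\<bar> \<le> C1" using XL by (rule Linf_D)
  obtain C2 where Y[measurable]: "Y \<in> borel_measurable M" and CY: "AE \<omega> in M. \<bar>Y \<omega>\<bar> \<le> C2" using YL by (rule Linf_D)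
  obtain C3 where Z[measurable]: "Z \<in> borel_measurable M" and CZ: "AE \<omega> in M. \<bar>Z \<omega>\<bar> \<le> C3" using ZL by (rule Linf_D)
  define z where "z = VaR M 1 Z"
  have z1: "1 \<le> dF M Z z" using VaR_props(1)[OF Z CZ, of 1] by (simp add: z_def)
  show ?thesis
  proof (cases "g = 0 \<or> g = 1")
    case True
    then show ?thesis
    proof
      assume "g = 0"
      then have "dF M Z = dF M Y" using mix by (auto simp: fun_eq_iff)
      then show ?thesis using \<open>g = 0\<close> by (simp add: ES_def VaR_dF)
    next
      assume "g = 1"
      then have "dF M Z = dF M X" using mix by (auto simp: fun_eq_iff)
      then show ?thesis using \<open>g = 1\<close> by (simp add: ES_def VaR_dF)
    qed
  next
    case False
    then have g': "0 < g" "g < 1" using g by auto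
    have hx: "dF M X z \<le> 1" "dF M Y z \<le> 1" by (rule dF_le1)+
    have s: "1 \<le> g * dF M X z + (1 - g) * dF M Y z" using z1 mix[of z] by simp
    have "1 \<le> dF M X z"
    proof (rule ccontr)
      assume "\<not> 1 \<le> dF M X z"
      then have "g * dF M X z < g * 1" using g' by (intro mult_strict_left_mono) auto
      moreover have "(1 - g) * dF M Y z \<le> (1 - g) * 1" using g' hx by (intro mult_left_mono) auto
      ultimately show False using s by simp
    qed
    moreover have "1 \<le> dF M Y z"
    proof (rule ccontr)
      assume "\<not> 1 \<le> dF M Y z"
      then have "(1 - g) * dF M Y z < (1 - g) * 1" using g' by (intro mult_strict_left_mono) auto
      moreover have "g * dF M X z \<le> g * 1" using g' hx by (intro mult_left_mono) auto
      ultimately show False using s by simp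
    qed
    ultimately have "VaR M 1 X \<le> z" "VaR M 1 Y \<le> z"
      using VaR_props(4)[OF X CX, of 1 z] VaR_props(4)[OF Y CY, of 1 z] by auto
    then have "g * VaR M 1 X + (1 - g) * VaR M 1 Y \<le> g * z + (1 - g) * z"
      using g by (intro add_mono mult_left_mono) auto
    then show ?thesis by (simp add: ES_def z_def algebra_simps)
  qed
qed

lemma atomless_small:
  assumes am: "atomless M" and E: "E \<in> sets M" "0 < prob E" and e: "0 < \<epsilon>"
  shows "\<exists>D\<in>sets M. D \<subseteq> E \<and> 0 < prob D \<and> prob D < \<epsilon>"
proof -
  have step: "\<exists>D\<in>sets M. D \<subseteq> E \<and> 0 < prob D \<and> prob D \<le> prob E / 2 ^ n" for n
  proof (induction n)
    case 0
    then show ?case using E by auto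
  next
    case (Suc n)
    then obtain D where D: "D \<in> sets M" "D \<subseteq> E" "0 < prob D" "prob D \<le> prob E / 2 ^ n" by blast
    then obtain B where B: "B \<in> sets M" "B \<subseteq> D" "0 < prob B" "prob B < prob D"
      using am unfolding atomless_def by blast
    have h: "prob E / 2 ^ Suc n = (prob E / 2 ^ n) / 2" by simp
    have h2: "prob D / 2 \<le> prob E / 2 ^ Suc n" unfolding h using D(4) by (intro divide_right_mono) auto
    show ?case
    proof (cases "prob B \<le> prob D / 2")
      case True
      then show ?thesis using B D h2 by (intro bexI[of _ B]) auto
    next
      case False
      have "prob (D - B) = prob D - prob B" using B D by (intro finite_measure_Diff) auto
      then show ?thesis using B D False h2 by (intro bexI[of _ "D - B"]) auto
    qed
  qed
  obtain n where n: "prob E / \<epsilon> < 2 ^ n" using real_arch_pow[of 2 "prob E / \<epsilon>"] by auto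
  then have "prob E < \<epsilon> * 2 ^ n" using e by (simp add: pos_divide_less_eq mult.commute)
  then have lt: "prob E / 2 ^ n < \<epsilon>" by (simp add: divide_less_eq)
  obtain D where "D \<in> sets M" "D \<subseteq> E" "0 < prob D" "prob D \<le> prob E / 2 ^ n" using step[of n] by blast
  then show ?thesis using lt by (intro bexI[of _ D]) auto
qed

end

definition hh :: "real \<Rightarrow> real \<Rightarrow> real" where
  "hh \<alpha> p = (if \<alpha> < 1 then min 1 (p / (1 - \<alpha>)) else 1)"

lemma hh_mono: "0 \<le> p \<Longrightarrow> \<alpha> \<le> \<alpha>' \<Longrightarrow> \<alpha>' \<le> 1 \<Longrightarrow> hh \<alpha> p \<le> hh \<alpha>' p"
  unfolding hh_def by (auto intro!: divide_left_mono mult_pos_pos simp: min_def)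

lemma hh_le1: "hh \<alpha> p \<le> 1"
  unfolding hh_def by auto

lemma ESL_upper:
  assumes mono: "\<And>\<alpha> \<alpha>'. 0 \<le> \<alpha> \<Longrightarrow> \<alpha> \<le> \<alpha>' \<Longrightarrow> \<alpha>' \<le> 1 \<Longrightarrow> ES M \<alpha> X \<le> ES M \<alpha>' X"
    and L: "\<And>x. 0 \<le> \<Lambda> x \<and> \<Lambda> x \<le> 1" and anti: "\<And>x y. x \<le> y \<Longrightarrow> \<Lambda> y \<le> \<Lambda> x"
  shows "ES_Lambda M \<Lambda> X \<le> max x0 (ES M (\<Lambda> x0) X)"
  unfolding ES_Lambda_def
proof (rule cSUP_least)
  fix x
  show "min (ES M (\<Lambda> x) X) x \<le> max x0 (ES M (\<Lambda> x0) X)"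
  proof (cases "x \<le> x0")
    case True
    then show ?thesis by simp
  next
    case False
    then have "ES M (\<Lambda> x) X \<le> ES M (\<Lambda> x0) X" using mono L anti[of x0 x] by auto
    then show ?thesis by simp
  qed
qed simp

lemma ESL_lower:
  assumes bnd: "\<And>\<alpha>. 0 \<le> \<alpha> \<Longrightarrow> \<alpha> \<le> 1 \<Longrightarrow> ES M \<alpha> X \<le> B"
    and L: "\<And>x. 0 \<le> \<Lambda> x \<and> \<Lambda> x \<le> 1"
  shows "min x0 (ES M (\<Lambda> x0) X) \<le> ES_Lambda M \<Lambda> X"
proof -
  have "min (ES M (\<Lambda> x) X) x \<le> B" for x using bnd[of "\<Lambda> x"] L[of x] by (simp add: min.coboundedI1)
  then have "bdd_above (range (\<lambda>x. min (ES M (\<Lambda> x) X) x))"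
    by (intro bdd_aboveI2)
  then have "min (ES M (\<Lambda> x0) X) x0 \<le> ES_Lambda M \<Lambda> X"
    unfolding ES_Lambda_def by (rule cSUP_upper[OF UNIV_I])
  then show ?thesis by (simp add: min.commute)
qed

lemma ES_cong:
  assumes "\<And>\<omega>. \<omega> \<in> space M \<Longrightarrow> X \<omega> = Y \<omega>"
  shows "ES M \<alpha> X = ES M \<alpha> Y" "ES_Lambda M \<Lambda> X = ES_Lambda M \<Lambda> Y"
proof -
  have "dF M X = dF M Y" using assms unfolding dF_def by (auto intro!: arg_cong[where f="measure M"])
  then have "VaR M \<beta> X = VaR M \<beta> Y" for \<beta> by (simp add: VaR_dF)
  then have E: "ES M a X = ES M a Y" for a by (simp add: ES_def)
  then show "ES M \<alpha> X = ES M \<alpha> Y" .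
  show "ES_Lambda M \<Lambda> X = ES_Lambda M \<Lambda> Y" unfolding ES_Lambda_def E ..

qed

context prob_space
begin

lemma atomless_ivt:
  assumes am: "atomless M" and ab: "0 \<le> a" "a < b" "b \<le> 1"
  shows "\<exists>B\<in>sets M. a \<le> prob B \<and> prob B < b"
proof (rule ccontr)
  assume contra: "\<not> (\<exists>B\<in>sets M. a \<le> prob B \<and> prob B < b)"
  define T where "T S = {prob D | D. D \<in> sets M \<and> D \<inter> S = {} \<and> prob S + prob D < b}" for S
  define d where "d S = Sup (T S)" for S
  define P where "P S D \<longleftrightarrow> D \<in> sets M \<and> D \<inter> S = {} \<and> prob S + prob D < b \<and> d S \<le> 2 * prob D" for S D
  define nxt where "nxt S = S \<union> (SOME D. P S D)" for S
  define B where "B n = (nxt ^^ n) {}" for n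
  have Tbdd: "bdd_above (T S)" for S unfolding T_def by (auto intro!: bdd_aboveI[where M=1])
  have exP: "\<exists>D. P S D" if "S \<in> sets M" "prob S < b" for S
  proof -
    have "0 \<in> T S" using that unfolding T_def by (auto intro!: exI[of _ "{}"])
    then have ne: "T S \<noteq> {}" by auto
    show ?thesis
    proof (cases "d S \<le> 0")
      case True
      then show ?thesis using that unfolding P_def by (intro exI[of _ "{}"]) auto
    next
      case False
      then have "d S / 2 < Sup (T S)" unfolding d_def by simp
      then obtain y where "y \<in> T S" "d S / 2 < y" using less_cSup_iff[OF ne Tbdd] by auto
      then obtain D where "D \<in> sets M" "D \<inter> S = {}" "prob S + prob D < b" "d S / 2 < prob D"
        unfolding T_def by auto
      then show ?thesis unfolding P_def by (intro exI[of _ D]) auto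
    qed
  qed
  have inv: "B n \<in> sets M \<and> prob (B n) < b" for n
  proof (induction n)
    case 0
    then show ?case using ab by (simp add: B_def)
  next
    case (Suc n)
    have ex: "\<exists>D. P (B n) D" using exP Suc by blast
    have PP: "P (B n) (SOME D. P (B n) D)" using someI_ex[OF ex] .
    then have D: "(SOME D. P (B n) D) \<in> sets M" "(SOME D. P (B n) D) \<inter> B n = {}"
      "prob (B n) + prob (SOME D. P (B n) D) < b" unfolding P_def by blast+
    have eq: "B (Suc n) = B n \<union> (SOME D. P (B n) D)" by (simp add: B_def nxt_def)
    have "prob (B n \<union> (SOME D. P (B n) D)) = prob (B n) + prob (SOME D. P (B n) D)"
      using D Suc by (intro finite_measure_Union) auto
    then show ?case using D Suc unfolding eq by auto
  qed
  have stepB: "B n \<subseteq> B (Suc n) \<and> d (B n) \<le> 2 * (prob (B (Suc n)) - prob (B n))" for n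
  proof -
    have ex: "\<exists>D. P (B n) D" using exP inv by blast
    have PP: "P (B n) (SOME D. P (B n) D)" using someI_ex[OF ex] .
    then have D: "(SOME D. P (B n) D) \<in> sets M" "(SOME D. P (B n) D) \<inter> B n = {}"
      "d (B n) \<le> 2 * prob (SOME D. P (B n) D)" unfolding P_def by blast+
    have eq: "B (Suc n) = B n \<union> (SOME D. P (B n) D)" by (simp add: B_def nxt_def)
    have "prob (B n \<union> (SOME D. P (B n) D)) = prob (B n) + prob (SOME D. P (B n) D)"
      using D inv[of n] by (intro finite_measure_Union) auto
    then show ?thesis using D unfolding eq by auto
  qed
  have lt: "prob (B n) < a" for n using contra inv[of n] by auto
  have inc: "incseq B" using stepB by (intro incseq_SucI) auto
  have lim: "(\<lambda>n. prob (B n)) \<longlonglongrightarrow> prob (\<Union>n. B n)"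
    using inv inc by (intro finite_Lim_measure_incseq) auto
  have "prob (\<Union>n. B n) \<le> a"
    using lim lt by (intro LIMSEQ_le_const2[OF lim]) (auto intro: less_imp_le)
  define U where "U = (\<Union>n. B n)"
  have U: "U \<in> sets M" unfolding U_def using inv by auto
  have "prob (space M - U) = 1 - prob U" using U by (rule prob_compl)
  then have "0 < prob (space M - U)" using \<open>prob (\<Union>n. B n) \<le> a\<close> ab unfolding U_def by simp
  then obtain D where D: "D \<in> sets M" "D \<subseteq> space M - U" "0 < prob D" "prob D < b - a"
    using atomless_small[OF am, of "space M - U" "b - a"] U ab by auto
  have dD: "prob D \<le> d (B n)" for n
  proof -
    have "D \<inter> B n = {}" using D(2) unfolding U_def by auto
    moreover have "prob (B n) + prob D < b" using lt[of n] D by simp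
    ultimately have "prob D \<in> T (B n)" unfolding T_def using D(1) by blast
    then show ?thesis unfolding d_def by (rule cSup_upper[OF _ Tbdd])
  qed
  have grow: "real n * prob D / 2 \<le> prob (B n)" for n
  proof (induction n)
    case 0
    then show ?case by simp
  next
    case (Suc n)
    then show ?case using stepB[of n] dD[of n] by (simp add: field_simps)
  qed
  obtain n where "2 / prob D < real n" using reals_Archimedean2 by blast
  then have "1 < real n * prob D / 2" using D(3) by (simp add: field_simps)
  then show False using grow[of n] prob_le_1[of "B n"] by simp
qed

lemma bern_dF:
  assumes A: "A \<in> sets M" and w: "0 < w"
  shows "dF M (\<lambda>\<omega>. v + w * indicator A \<omega>) x = (if x < v then 0 else if x < v + w then 1 - prob A else 1)"
proof -
  consider "x < v" | "v \<le> x" "x < v + w" | "v + w \<le> x" by linarith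
  then show ?thesis
  proof cases
    case 1
    have e: "{\<omega>\<in>space M. v + w * indicator A \<omega> \<le> x} = {}" using w 1
      by (auto simp: indicator_def split: if_splits)
    show ?thesis unfolding dF_def e using 1 by simp
  next
    case 2
    have e: "{\<omega>\<in>space M. v + w * indicator A \<omega> \<le> x} = space M - A" using w 2
      by (auto simp: indicator_def split: if_splits)
    show ?thesis unfolding dF_def e using 2 A by (simp add: prob_compl)
  next
    case 3
    have e: "{\<omega>\<in>space M. v + w * indicator A \<omega> \<le> x} = space M" using w 3
      by (auto simp: indicator_def split: if_splits)
    show ?thesis unfolding dF_def e using 3 w by (simp add: prob_space)
  qed
qed

lemma bern_Linf:
  assumes A: "A \<in> sets M"
  shows "(\<lambda>\<omega>. v + w * indicator A \<omega>) \<in> Linf M"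
proof -
  have "AE \<omega> in M. \<bar>v + w * indicator A \<omega>\<bar> \<le> \<bar>v\<bar> + \<bar>w\<bar>"
    by (intro AE_I2) (auto simp: indicator_def)
  then show ?thesis unfolding Linf_def using A by auto
qed

lemma bern_VaR:
  assumes A: "A \<in> sets M" and w: "0 < w" and p: "0 < prob A" and b: "0 < \<beta>" "\<beta> \<le> 1"
  shows "VaR M \<beta> (\<lambda>\<omega>. v + w * indicator A \<omega>) = (if \<beta> \<le> 1 - prob A then v else v + w)"
proof -
  define X where "X = (\<lambda>\<omega>. v + w * indicator A \<omega>)"
  have XL: "X \<in> Linf M" unfolding X_def by (rule bern_Linf[OF A])
  obtain C where X: "X \<in> borel_measurable M" and C: "AE \<omega> in M. \<bar>X \<omega>\<bar> \<le> C" using XL by (rule Linf_D)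
  have F: "dF M X x = (if x < v then 0 else if x < v + w then 1 - prob A else 1)" for x
    unfolding X_def by (rule bern_dF[OF A w])
  define y where "y = (if \<beta> \<le> 1 - prob A then v else v + w)"
  have le: "VaR M \<beta> X \<le> y"
    using VaR_props(4)[OF X C b, of y] F[of y] w b by (auto simp: y_def)
  have ge: "y \<le> VaR M \<beta> X"
  proof (rule ccontr)
    assume "\<not> y \<le> VaR M \<beta> X"
    moreover have "\<beta> \<le> dF M X (VaR M \<beta> X)" by (rule VaR_props(1)[OF X C b])
    ultimately show False using F[of "VaR M \<beta> X"] b p by (auto simp: y_def split: if_splits)
  qed
  show ?thesis using le ge unfolding X_def y_def by simp
qed

lemma bern_ES:
  assumes A: "A \<in> sets M" and w: "0 < w" and p: "0 < prob A" and a: "0 \<le> \<alpha>" "\<alpha> \<le> 1"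
  shows "ES M \<alpha> (\<lambda>\<omega>. v + w * indicator A \<omega>) = v + w * hh \<alpha> (prob A)"
proof -
  define X where "X = (\<lambda>\<omega>. v + w * indicator A \<omega>)"
  define p where "p = prob A"
  have p1: "p \<le> 1" unfolding p_def by simp
  have XL: "X \<in> Linf M" unfolding X_def by (rule bern_Linf[OF A])
  obtain C where X[measurable]: "X \<in> borel_measurable M" and C: "AE \<omega> in M. \<bar>X \<omega>\<bar> \<le> C" using XL by (rule Linf_D)
  have V: "VaR M \<beta> X = (if \<beta> \<le> 1 - p then v else v + w)" if "0 < \<beta>" "\<beta> \<le> 1" for \<beta>
    unfolding X_def p_def by (rule bern_VaR[OF A w p that])
  show ?thesis
  proof (cases "\<alpha> < 1")
    case False
    then have "\<alpha> = 1" using a by simp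
    then show ?thesis using V[of 1] p unfolding X_def[symmetric] p_def[symmetric]
      by (simp add: ES_def hh_def)
  next
    case True
    have qint: "qq M X integrable_on {0..1}"
      by (rule bounded_meas_integrable_on[OF qq_meas[OF X C], where B="\<bar>C\<bar>"]) (rule qq_bound[OF X C])
    have vint: "(\<lambda>\<beta>. VaR M \<beta> X) integrable_on {0..1}"
      by (rule integrable_spike[OF qint negligible_sing[of 0]]) (auto simp: qq_def)
    have vint': "(\<lambda>\<beta>. VaR M \<beta> X) integrable_on {\<alpha>..1}"
      by (rule integrable_on_subinterval[OF vint]) (use a in auto)
    have I: "integral {\<alpha>..1} (\<lambda>\<beta>. VaR M \<beta> X) = (if \<alpha> < 1 - p then v * (1 - p - \<alpha>) + (v + w) * p else (v + w) * (1 - \<alpha>))"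
    proof (cases "\<alpha> < 1 - p")
      case True
      have "integral {\<alpha>..1 - p} (\<lambda>\<beta>. VaR M \<beta> X) = integral {\<alpha>..1 - p} (\<lambda>\<beta>. v)"
      proof (rule integral_spike[OF negligible_sing[of \<alpha>]])
        fix x assume "x \<in> {\<alpha>..1 - p} - {\<alpha>}"
        then have "0 < x" "x \<le> 1" "x \<le> 1 - p" using a p1 p by (auto simp: p_def)
        then show "v = VaR M x X" using V[of x] by auto
      qed
      moreover have "integral {1 - p..1} (\<lambda>\<beta>. VaR M \<beta> X) = integral {1 - p..1} (\<lambda>\<beta>. v + w)"
      proof (rule integral_spike[OF negligible_sing[of "1 - p"]])
        fix x assume "x \<in> {1 - p..1} - {1 - p}"
        then have "0 < x" "x \<le> 1" "\<not> x \<le> 1 - p" using a p1 p True by (auto simp: p_def)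
        then show "v + w = VaR M x X" using V[of x] by auto
      qed
      moreover have "integral {\<alpha>..1 - p} (\<lambda>\<beta>. VaR M \<beta> X) + integral {1 - p..1} (\<lambda>\<beta>. VaR M \<beta> X)
          = integral {\<alpha>..1} (\<lambda>\<beta>. VaR M \<beta> X)"
        by (rule Henstock_Kurzweil_Integration.integral_combine[OF _ _ vint']) (use True p in \<open>auto simp: p_def\<close>)
      ultimately show ?thesis using True p by (simp add: p_def algebra_simps)
    next
      case False
      have "integral {\<alpha>..1} (\<lambda>\<beta>. VaR M \<beta> X) = integral {\<alpha>..1} (\<lambda>\<beta>. v + w)"
      proof (rule integral_spike[OF negligible_sing[of \<alpha>]])
        fix x assume "x \<in> {\<alpha>..1} - {\<alpha>}"
        then have x: "\<alpha> \<le> x" "x \<le> 1" "x \<noteq> \<alpha>" by auto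
        then have "0 < x" "x \<le> 1" "\<not> x \<le> 1 - p" using a(1) False by linarith+
        then show "v + w = VaR M x X" using V[of x] by auto
      qed
      then show ?thesis using False a by simp
    qed
    show ?thesis
    proof (cases "\<alpha> < 1 - p")
      case T2: True
      have "p / (1 - \<alpha>) < 1" using T2 True by (simp add: divide_less_eq)
      then have h: "hh \<alpha> p = p / (1 - \<alpha>)" using True by (simp add: hh_def)
      have "ES M \<alpha> X = (v * (1 - p - \<alpha>) + (v + w) * p) / (1 - \<alpha>)"
        using I T2 True by (simp add: ES_def)
      also have "\<dots> = v + w * (p / (1 - \<alpha>))" using True by (simp add: field_simps)
      finally show ?thesis using h unfolding X_def p_def by simp
    next
      case F2: False
      have "1 \<le> p / (1 - \<alpha>)" using F2 True by (simp add: le_divide_eq)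
      then have h: "hh \<alpha> p = 1" using True by (simp add: hh_def)
      have "ES M \<alpha> X = v + w" using I F2 True by (simp add: ES_def)
      then show ?thesis using h unfolding X_def p_def by simp
    qed
  qed
qed

lemma bern_ES_mono:
  assumes A: "A \<in> sets M" and w: "0 < w" and p: "0 < prob A"
  shows "\<And>\<alpha> \<alpha>'. 0 \<le> \<alpha> \<Longrightarrow> \<alpha> \<le> \<alpha>' \<Longrightarrow> \<alpha>' \<le> 1 \<Longrightarrow>
      ES M \<alpha> (\<lambda>\<omega>. v + w * indicator A \<omega>) \<le> ES M \<alpha>' (\<lambda>\<omega>. v + w * indicator A \<omega>)"
    and "\<And>\<alpha>. 0 \<le> \<alpha> \<Longrightarrow> \<alpha> \<le> 1 \<Longrightarrow> ES M \<alpha> (\<lambda>\<omega>. v + w * indicator A \<omega>) \<le> v + w"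
proof -
  fix \<alpha> \<alpha>' :: real assume "0 \<le> \<alpha>" "\<alpha> \<le> \<alpha>'" "\<alpha>' \<le> 1"
  then show "ES M \<alpha> (\<lambda>\<omega>. v + w * indicator A \<omega>) \<le> ES M \<alpha>' (\<lambda>\<omega>. v + w * indicator A \<omega>)"
    using bern_ES[OF A w p] hh_mono[of "prob A" \<alpha> \<alpha>'] w by (simp add: mult_left_mono)
next
  fix \<alpha> :: real assume "0 \<le> \<alpha>" "\<alpha> \<le> 1"
  then show "ES M \<alpha> (\<lambda>\<omega>. v + w * indicator A \<omega>) \<le> v + w"
    using bern_ES[OF A w p] hh_le1[of \<alpha> "prob A"] w by (simp add: mult_left_le)
qed

end


lemma nonconst_pts:
  fixes \<Lambda> :: "real \<Rightarrow> real"
  assumes anti: "\<And>x y. x \<le> y \<Longrightarrow> \<Lambda> y \<le> \<Lambda> x" and nc: "\<not> (\<exists>c. \<forall>x. \<Lambda> x = c)"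
  obtains x1 x2 :: real where "x1 < x2" "\<Lambda> x2 < \<Lambda> x1"
proof -
  obtain a where "\<Lambda> a \<noteq> \<Lambda> 0" using nc by blast
  then show ?thesis
  proof (cases "a < 0")
    case True
    have "\<Lambda> 0 < \<Lambda> a" using anti[of a 0] True \<open>\<Lambda> a \<noteq> \<Lambda> 0\<close> by (auto simp: less_le)
    then show ?thesis using that[of a 0] True by blast
  next
    case False
    then have "0 < a" using \<open>\<Lambda> a \<noteq> \<Lambda> 0\<close> by (cases "a = 0") auto
    have "\<Lambda> a < \<Lambda> 0" using anti[of 0 a] \<open>0 < a\<close> \<open>\<Lambda> a \<noteq> \<Lambda> 0\<close> by (auto simp: less_le)
    then show ?thesis using that[of 0 a] \<open>0 < a\<close> by blast
  qed
qed

context prob_space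
begin

lemma const_Linf: "(\<lambda>\<omega>. m) \<in> Linf M"
  unfolding Linf_def by (auto intro!: exI[of _ "\<bar>m\<bar>"])

lemma const_ES:
  assumes "0 \<le> \<alpha>" "\<alpha> \<le> 1"
  shows "ES M \<alpha> (\<lambda>\<omega>. (m - 1) + 1 * indicator (space M) \<omega>) = m"
proof -
  have "hh \<alpha> 1 = 1" using assms by (auto simp: hh_def min_def le_divide_eq)
  then show ?thesis using bern_ES[of "space M" 1 \<alpha> "m - 1"] assms by (simp add: prob_space)
qed

lemma const_ESL_upper:
  assumes L: "\<And>x. 0 \<le> \<Lambda> x \<and> \<Lambda> x \<le> 1" and anti: "\<And>x y. x \<le> y \<Longrightarrow> \<Lambda> y \<le> \<Lambda> x"
  shows "ES_Lambda M \<Lambda> (\<lambda>\<omega>. m) \<le> m" "m \<le> ES_Lambda M \<Lambda> (\<lambda>\<omega>. m)"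
proof -
  have eq: "ES_Lambda M \<Lambda> (\<lambda>\<omega>. m) = ES_Lambda M \<Lambda> (\<lambda>\<omega>. (m - 1) + 1 * indicator (space M) \<omega>)"
    by (rule ES_cong(2)) simp
  have "ES_Lambda M \<Lambda> (\<lambda>\<omega>. (m - 1) + 1 * indicator (space M) \<omega>)
      \<le> max m (ES M (\<Lambda> m) (\<lambda>\<omega>. (m - 1) + 1 * indicator (space M) \<omega>))"
    by (rule ESL_upper[OF bern_ES_mono(1)[of "space M" 1] L anti]) (auto simp: prob_space)
  then show "ES_Lambda M \<Lambda> (\<lambda>\<omega>. m) \<le> m" using eq const_ES[of "\<Lambda> m" m] L[of m] by simp
  have "min m (ES M (\<Lambda> m) (\<lambda>\<omega>. (m - 1) + 1 * indicator (space M) \<omega>))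
      \<le> ES_Lambda M \<Lambda> (\<lambda>\<omega>. (m - 1) + 1 * indicator (space M) \<omega>)"
    by (rule ESL_lower[OF bern_ES_mono(2)[of "space M" 1] L]) (auto simp: prob_space)
  then show "m \<le> ES_Lambda M \<Lambda> (\<lambda>\<omega>. m)" using eq const_ES[of "\<Lambda> m" m] L[of m] by simp
qed

lemma not_convex:
  assumes am: "atomless M" and L: "\<And>x. 0 \<le> \<Lambda> x \<and> \<Lambda> x \<le> 1"
    and anti: "\<And>x y. x \<le> y \<Longrightarrow> \<Lambda> y \<le> \<Lambda> x"
    and x12: "x1 < x2" "\<Lambda> x2 < \<Lambda> x1"
  shows "\<not> ES_Lambda_convex M \<Lambda>"
proof
  assume cvx: "ES_Lambda_convex M \<Lambda>"
  define l1 where "l1 = \<Lambda> x1"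
  define l2 where "l2 = \<Lambda> x2"
  have l: "0 \<le> l2" "l2 < l1" "l1 \<le> 1" using L x12 unfolding l1_def l2_def by auto
  obtain A where A: "A \<in> sets M" "0 < prob A" "prob A < 1 - l2"
    using atomless_small[OF am, of "space M" "1 - l2"] l by (auto simp: prob_space)
  define p where "p = prob A"
  define h1 where "h1 = hh l1 p"
  define h2 where "h2 = hh l2 p"
  have h2: "h2 = p / (1 - l2)" using A l unfolding h2_def hh_def p_def by (auto simp: min_def divide_le_eq)
  have h21: "h2 < 1" using A l unfolding h2 p_def by (simp add: divide_less_eq)
  have h12: "h2 < h1"
  proof (cases "l1 < 1")
    case True
    have "p / (1 - l2) < p / (1 - l1)" using A l True unfolding p_def
      by (intro divide_strict_left_mono) auto
    then show ?thesis using h21 True unfolding h1_def h2 hh_def by auto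
  next
    case False
    then show ?thesis using h21 unfolding h1_def hh_def by auto
  qed
  define m where "m = 2 * x1 - x2 - 1"
  define Y where "Y = (\<lambda>\<omega>. (x2 - h2) + 1 * indicator A \<omega>)"
  define X where "X = (\<lambda>\<omega>::'a. m)"
  define Z where "Z = (\<lambda>\<omega>. (m + x2 - h2) / 2 + (1 / 2) * indicator A \<omega>)"
  have YL: "Y \<in> Linf M" unfolding Y_def by (rule bern_Linf[OF A(1)])
  have XL: "X \<in> Linf M" unfolding X_def by (rule const_Linf)
  have Zeq: "(\<lambda>\<omega>. 1 / 2 * X \<omega> + (1 - 1 / 2) * Y \<omega>) = Z"
    unfolding X_def Y_def Z_def by (auto simp: fun_eq_iff field_simps)
  have "ES_Lambda M \<Lambda> (\<lambda>\<omega>. 1 / 2 * X \<omega> + (1 - 1 / 2) * Y \<omega>)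
      \<le> 1 / 2 * ES_Lambda M \<Lambda> X + (1 - 1 / 2) * ES_Lambda M \<Lambda> Y"
  proof -
    have H: "\<And>g. 0 \<le> g \<and> g \<le> 1 \<Longrightarrow> ES_Lambda M \<Lambda> (\<lambda>\<omega>. g * X \<omega> + (1 - g) * Y \<omega>)
      \<le> g * ES_Lambda M \<Lambda> X + (1 - g) * ES_Lambda M \<Lambda> Y"
      using cvx XL YL unfolding ES_Lambda_convex_def by blast
    show ?thesis by (rule H) simp
  qed
  then have c1: "ES_Lambda M \<Lambda> Z \<le> 1 / 2 * ES_Lambda M \<Lambda> X + 1 / 2 * ES_Lambda M \<Lambda> Y"
    unfolding Zeq by simp
  have EX: "ES_Lambda M \<Lambda> X \<le> m" unfolding X_def by (rule const_ESL_upper(1)[OF L anti])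
  have "ES_Lambda M \<Lambda> Y \<le> max x2 (ES M (\<Lambda> x2) Y)"
    unfolding Y_def by (rule ESL_upper[OF bern_ES_mono(1)[OF A(1) _ A(2)] L anti]) auto
  moreover have "ES M (\<Lambda> x2) Y = x2"
    unfolding Y_def using bern_ES[OF A(1) _ A(2), where \<alpha>="\<Lambda> x2" and w=1 and v="x2 - h2"] L[of x2]
    by (simp add: h2_def l2_def p_def)
  ultimately have EY: "ES_Lambda M \<Lambda> Y \<le> x2" by simp
  have "min x1 (ES M (\<Lambda> x1) Z) \<le> ES_Lambda M \<Lambda> Z"
    unfolding Z_def by (rule ESL_lower[OF bern_ES_mono(2)[OF A(1) _ A(2)] L]) auto
  moreover have "ES M (\<Lambda> x1) Z = (m + x2 - h2) / 2 + (1 / 2) * h1"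
    unfolding Z_def using bern_ES[OF A(1) _ A(2), where \<alpha>="\<Lambda> x1" and w="1/2" and v="(m + x2 - h2) / 2"] L[of x1]
    by (simp add: h1_def l1_def p_def)
  ultimately have EZ: "min x1 ((m + x2 - h2) / 2 + (1 / 2) * h1) \<le> ES_Lambda M \<Lambda> Z" by simp
  have F1: "1 / 2 * ES_Lambda M \<Lambda> X + 1 / 2 * ES_Lambda M \<Lambda> Y \<le> (m + x2) / 2" using EX EY by simp
  have F2: "(m + x2) / 2 < min x1 ((m + x2 - h2) / 2 + (1 / 2) * h1)"
  proof -
    have e: "(m + x2 - h2) / 2 + (1 / 2) * h1 = (m + x2) / 2 + (h1 - h2) / 2" by (simp add: field_simps)
    have "(m + x2) / 2 < x1" unfolding m_def by (simp add: field_simps)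
    then show ?thesis unfolding e using h12 by simp
  qed
  have "(m + x2) / 2 < ES_Lambda M \<Lambda> Z" using F2 EZ by (rule less_le_trans)
  then show False using c1 F1 by linarith
qed

lemma not_concave:
  assumes am: "atomless M" and L: "\<And>x. 0 \<le> \<Lambda> x \<and> \<Lambda> x \<le> 1"
    and anti: "\<And>x y. x \<le> y \<Longrightarrow> \<Lambda> y \<le> \<Lambda> x"
    and x12: "x1 < x2" "\<Lambda> x2 < \<Lambda> x1"
  shows "\<not> ES_Lambda_concave_mixtures M \<Lambda>"
proof
  assume cc: "ES_Lambda_concave_mixtures M \<Lambda>"
  define l1 where "l1 = \<Lambda> x1"
  define l2 where "l2 = \<Lambda> x2"
  have l: "0 \<le> l2" "l2 < l1" "l1 \<le> 1" using L x12 unfolding l1_def l2_def by auto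
  define a0 where "a0 = max (1 - l1) ((1 - l2) / 2)"
  have a0: "0 \<le> a0" "a0 < 1 - l2" using l unfolding a0_def by auto
  obtain B where B: "B \<in> sets M" "a0 \<le> prob B" "prob B < 1 - l2"
    using atomless_ivt[OF am a0] l by auto
  define p1 where "p1 = prob B"
  have p1: "0 < p1" "1 - l1 \<le> p1" "p1 < 1 - l2"
    using B l unfolding p1_def a0_def by auto
  have "prob (space M - B) = 1 - p1" unfolding p1_def using B by (simp add: prob_compl)
  then have "0 < prob (space M - B)" using p1 l by simp
  then obtain D where D: "D \<in> sets M" "D \<subseteq> space M - B" "0 < prob D" "prob D < 1 - l2 - p1"
    using atomless_small[OF am, of "space M - B" "1 - l2 - p1"] B p1 by auto
  define C where "C = B \<union> D"
  define q where "q = prob C"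
  have Cs: "C \<in> sets M" unfolding C_def using B D by auto
  have q: "q = p1 + prob D" unfolding q_def C_def p1_def using B D by (intro finite_measure_Union) auto
  have qb: "p1 < q" "q < 1 - l2" using q D by auto
  have qpos: "0 < q" using qb p1 by simp
  define g where "g = (1 - q) / (1 - p1)"
  have g: "0 < g" "g < 1" using qb p1 l unfolding g_def by (auto simp: divide_less_eq)
  have g1: "g * (1 - p1) = 1 - q" using p1 l unfolding g_def by simp
  define u where "u = max x1 ((x2 - g * x1) / (1 - g)) + 1"
  have u1: "x1 + 1 \<le> u" unfolding u_def by simp
  have u2: "(x2 - g * x1) / (1 - g) + 1 \<le> u" unfolding u_def by simp
  have "x2 \<le> (x2 - g * x1) / (1 - g)"
    using g x12 by (simp add: le_divide_eq algebra_simps mult_left_mono)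
  then have ux2: "x2 < u" using u2 by simp
  have chord: "x2 < g * x1 + (1 - g) * u"
  proof -
    have "(1 - g) * ((x2 - g * x1) / (1 - g) + 1) \<le> (1 - g) * u" using u2 g by (intro mult_left_mono) auto
    moreover have "(1 - g) * ((x2 - g * x1) / (1 - g) + 1) = x2 - g * x1 + (1 - g)" using g by (simp add: field_simps)
    ultimately show ?thesis using g by simp
  qed
  define r where "r = q / (1 - l2)"
  have r: "0 < r" "r < 1" using qb qpos l unfolding r_def by (auto simp: divide_less_eq)
  define v where "v = (x2 - u * r) / (1 - r)"
  define w where "w = u - v"
  have vw: "v + w * r = x2"
  proof -
    have "v * (1 - r) = x2 - u * r" using r unfolding v_def by simp
    moreover have "v + w * r = v * (1 - r) + u * r" unfolding w_def by (simp add: algebra_simps)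
    ultimately show ?thesis by simp
  qed
  have w: "0 < w"
  proof -
    have "x2 - u * r < u * (1 - r)" using ux2 by (simp add: algebra_simps)
    then have "v < u" unfolding v_def using r by (simp add: divide_less_eq)
    then show ?thesis unfolding w_def by simp
  qed
  have uvw: "v + w = u" unfolding w_def by simp
  define X where "X = (\<lambda>\<omega>. v + w * indicator B \<omega>)"
  define Z where "Z = (\<lambda>\<omega>. v + w * indicator C \<omega>)"
  define Y where "Y = (\<lambda>\<omega>::'a. u)"
  have XL: "X \<in> Linf M" unfolding X_def by (rule bern_Linf[OF B(1)])
  have ZL: "Z \<in> Linf M" unfolding Z_def by (rule bern_Linf[OF Cs])
  have YL: "Y \<in> Linf M" unfolding Y_def by (rule const_Linf)
  have pB: "0 < prob B" using p1(1) unfolding p1_def .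
  have pC: "0 < prob C" using qpos unfolding q_def .
  have FX: "dF M X x = (if x < v then 0 else if x < u then 1 - p1 else 1)" for x
    unfolding X_def p1_def uvw[symmetric] by (rule bern_dF[OF B(1) w])
  have FZ: "dF M Z x = (if x < v then 0 else if x < u then 1 - q else 1)" for x
    unfolding Z_def q_def uvw[symmetric] by (rule bern_dF[OF Cs w])
  have FY: "dF M Y x = (if x < u then 0 else 1)" for x
  proof (cases "x < u")
    case True
    then have e: "{\<omega>\<in>space M. Y \<omega> \<le> x} = {}" unfolding Y_def by auto
    show ?thesis unfolding dF_def e using True by simp
  next
    case False
    then have e: "{\<omega>\<in>space M. Y \<omega> \<le> x} = space M" unfolding Y_def by auto
    show ?thesis unfolding dF_def e using False by (simp add: prob_space)
  qed
  have vu: "v < u" using w uvw by simp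
  have mix: "measure M {\<omega>\<in>space M. Z \<omega> \<le> x}
      = g * measure M {\<omega>\<in>space M. X \<omega> \<le> x} + (1 - g) * measure M {\<omega>\<in>space M. Y \<omega> \<le> x}" for x
    using FX[of x] FY[of x] FZ[of x] g1 vu unfolding dF_def by (auto split: if_splits)
  have conc: "g * ES_Lambda M \<Lambda> X + (1 - g) * ES_Lambda M \<Lambda> Y \<le> ES_Lambda M \<Lambda> Z"
    using cc XL YL ZL g mix unfolding ES_Lambda_concave_mixtures_def by auto
  have hx: "hh l1 p1 = 1" using p1 l by (auto simp: hh_def min_def le_divide_eq)
  have "min x1 (ES M (\<Lambda> x1) X) \<le> ES_Lambda M \<Lambda> X"
    unfolding X_def by (rule ESL_lower[OF bern_ES_mono(2)[OF B(1) w pB] L])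
  moreover have "ES M (\<Lambda> x1) X = u"
    unfolding X_def using bern_ES[OF B(1) w pB, of "\<Lambda> x1" v] L[of x1] hx uvw
    by (simp add: l1_def p1_def)
  ultimately have EX: "x1 \<le> ES_Lambda M \<Lambda> X" using u1 by simp
  have EY: "u \<le> ES_Lambda M \<Lambda> Y" unfolding Y_def by (rule const_ESL_upper(2)[OF L anti])
  have hz: "hh l2 q = r" using qb l r unfolding r_def by (auto simp: hh_def min_def)
  have "ES_Lambda M \<Lambda> Z \<le> max x2 (ES M (\<Lambda> x2) Z)"
    unfolding Z_def by (rule ESL_upper[OF bern_ES_mono(1)[OF Cs w pC] L anti])
  moreover have "ES M (\<Lambda> x2) Z = x2"
    unfolding Z_def using bern_ES[OF Cs w pC, of "\<Lambda> x2" v] L[of x2] hz vw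
    by (simp add: l2_def q_def)
  ultimately have EZ: "ES_Lambda M \<Lambda> Z \<le> x2" by simp
  have "g * x1 + (1 - g) * u \<le> g * ES_Lambda M \<Lambda> X + (1 - g) * ES_Lambda M \<Lambda> Y"
    using EX EY g by (intro add_mono mult_left_mono) auto
  then show False using conc EZ chord by linarith
qed

lemma const_convex:
  assumes c: "0 \<le> c" "c \<le> 1"
  shows "ES_Lambda_convex M (\<lambda>_. c)"
  unfolding ES_Lambda_convex_def ES_Lambda_const
proof (intro ballI allI impI)
  fix X Y and g :: real
  assume XY: "X \<in> Linf M" "Y \<in> Linf M" and g: "0 \<le> g \<and> g \<le> 1"
  show "ES M c (\<lambda>\<omega>. g * X \<omega> + (1 - g) * Y \<omega>) \<le> g * ES M c X + (1 - g) * ES M c Y"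
  proof (cases "c < 1")
    case True
    then show ?thesis using ES_convex_lt1[OF XY] g c by auto
  next
    case False
    then have "c = 1" using c by simp
    then show ?thesis using ES1_convex[OF XY] g by auto
  qed
qed

lemma const_concave:
  assumes c: "0 \<le> c" "c \<le> 1"
  shows "ES_Lambda_concave_mixtures M (\<lambda>_. c)"
  unfolding ES_Lambda_concave_mixtures_def ES_Lambda_const
proof (intro ballI allI impI)
  fix X Y Z and g :: real
  assume XYZ: "X \<in> Linf M" "Y \<in> Linf M" "Z \<in> Linf M"
    and H: "0 \<le> g \<and> g \<le> 1 \<and> (\<forall>x. measure M {\<omega>\<in>space M. Z \<omega> \<le> x}
            = g * measure M {\<omega>\<in>space M. X \<omega> \<le> x} + (1 - g) * measure M {\<omega>\<in>space M. Y \<omega> \<le> x})"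
  then have g: "0 \<le> g" "g \<le> 1" and mix: "\<And>x. dF M Z x = g * dF M X x + (1 - g) * dF M Y x"
    unfolding dF_def by auto
  show "g * ES M c X + (1 - g) * ES M c Y \<le> ES M c Z"
  proof (cases "c < 1")
    case True
    then show ?thesis using ES_mix_lt1[OF XYZ g c(1) True mix] by simp
  next
    case False
    then have "c = 1" using c by simp
    then show ?thesis using ES1_mix[OF XYZ g mix] by simp
  qed
qed

end

theorem proposition3:
  fixes M :: "'a measure" and \<Lambda> :: "real \<Rightarrow> real"
  assumes "prob_space M" and "atomless M"
    and "\<And>x. 0 \<le> \<Lambda> x \<and> \<Lambda> x \<le> 1"
    and "\<And>x y. x \<le> y \<Longrightarrow> \<Lambda> y \<le> \<Lambda> x"
  shows "(ES_Lambda_convex M \<Lambda> \<longleftrightarrow> ES_Lambda_concave_mixtures M \<Lambda>)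
       \<and> (ES_Lambda_concave_mixtures M \<Lambda> \<longleftrightarrow> (\<exists>c. \<forall>x. \<Lambda> x = c))"
proof -
  interpret P: prob_space M by (rule assms(1))
  have pos: "ES_Lambda_convex M \<Lambda> \<and> ES_Lambda_concave_mixtures M \<Lambda>" if ex: "\<exists>c. \<forall>x. \<Lambda> x = c"
  proof -
    obtain c where c: "\<And>x. \<Lambda> x = c" using ex by blast
    then have eq: "\<Lambda> = (\<lambda>_. c)" by (rule ext)
    have "0 \<le> c" "c \<le> 1" using assms(3)[of 0] c[of 0] by auto
    then show ?thesis unfolding eq using P.const_convex P.const_concave by blast
  qed
  have neg: "\<not> ES_Lambda_convex M \<Lambda> \<and> \<not> ES_Lambda_concave_mixtures M \<Lambda>" if nc: "\<not> (\<exists>c. \<forall>x. \<Lambda> x = c)"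
  proof -
    obtain x1 x2 where x: "x1 < x2" "\<Lambda> x2 < \<Lambda> x1" using nonconst_pts[OF assms(4) nc] by blast
    show ?thesis using P.not_convex[OF assms(2,3,4) x] P.not_concave[OF assms(2,3,4) x] by blast
  qed
  show ?thesis using pos neg by blast
qed

end
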